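(* Let $\phi\colon\mathbb{R}\to\mathbb{R}$ be an increasing homeomorphism with $\phi(0)=0$, let $f\colon\mathbb{R}\to\mathbb{R}$ be continuous and let $h\colon[0,T]\times\mathbb{R}\to\mathbb{R}$ be a Carathéodory function such that there exists $\gamma\in L^1([0,T],\mathbb{R}^+)$ with $h(t,u)\ge-\gamma(t)$ for a.e. $t\in[0,T]$ and all $u\in\mathbb{R}$. For $\lambda\in\,]0,1]$ consider $$(\phi(u'))'+\lambda f(u)u'+\lambda h(t,u)=0. \qquad (\ast_\lambda)$$ Then there exists a constant $K_0=K_0(\gamma)$ such that every $T$-periodic solution $u$ of $(\ast_\lambda)$ with $\lambda\in\,]0,1]$ satisfies $\max u-\min u\le K_0$ and $\|u'\|_{L^1}\le K_0$. Moreover, for any $\ell_1<\ell_2$ there exists $K_1>0$ such that every $T$-periodic solution $u$ of $(\ast_\lambda)$ with $\lambda\in\,]0,1]$ and $\ell_1\le u(t)\le\ell_2$ for all $t\in[0,T]$ satisfies $\|u'\|_\infty\le K_1$.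
   Context: A $T$-periodic solution is a $u\in\mathcal{C}^1([0,T])$ with $u(0)=u(T)$, $u'(0)=u'(T)$, $\phi(u')$ absolutely continuous, satisfying the equation a.e. A Carathéodory function is measurable in $t$, continuous in $u$, and for each $r>0$ bounded in absolute value on $[0,T]\times[-r,r]$ by an $L^1$ function of $t$. $\mathbb{R}^+$ denotes the nonnegative reals. *)

theory Defs
  imports "HOL-Analysis.Analysis"
begin

definition abs_cont_on :: "real set \<Rightarrow> (real \<Rightarrow> real) \<Rightarrow> bool" where
  "abs_cont_on S g \<longleftrightarrow>
     (\<forall>e>0. \<exists>d>0. \<forall>n::nat. \<forall>a b. 
        (\<forall>i<n. a i \<in> S \<and> b i \<in> S \<and> a i \<le> b i) \<and>
        (\<forall>i<n. \<forall>j<n. i \<noteq> j \<longrightarrow> b i \<le> a j \<or> b j \<le> a i) \<and>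
        (\<Sum>i<n. b i - a i) < d
        \<longrightarrow> (\<Sum>i<n. \<bar>g (b i) - g (a i)\<bar>) < e)"

definition caratheodory :: "real \<Rightarrow> (real \<Rightarrow> real \<Rightarrow> real) \<Rightarrow> bool" where
  "caratheodory T h \<longleftrightarrow>
     (\<forall>x. (\<lambda>t. h t x) measurable_on {0..T}) \<and>
     (\<forall>t\<in>{0..T}. continuous_on UNIV (h t)) \<and>
     (\<forall>r>0. \<exists>g. g absolutely_integrable_on {0..T} \<and>
        (\<forall>t\<in>{0..T}. \<forall>x. \<bar>x\<bar> \<le> r \<longrightarrow> \<bar>h t x\<bar> \<le> g t))"

definition periodic_solution ::
  "(real \<Rightarrow> real) \<Rightarrow> (real \<Rightarrow> real) \<Rightarrow> (real \<Rightarrow> real \<Rightarrow> real) \<Rightarrow> real \<Rightarrow> real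
     \<Rightarrow> (real \<Rightarrow> real) \<Rightarrow> (real \<Rightarrow> real) \<Rightarrow> bool" where
  "periodic_solution \<phi> f h T lam u u' \<longleftrightarrow>
     (\<forall>t\<in>{0..T}. (u has_real_derivative u' t) (at t within {0..T})) \<and>
     continuous_on {0..T} u' \<and>
     u 0 = u T \<and> u' 0 = u' T \<and>
     abs_cont_on {0..T} (\<lambda>t. \<phi> (u' t)) \<and>
     (AE t in lebesgue. t \<in> {0..T} \<longrightarrow>
        ((\<lambda>s. \<phi> (u' s)) has_real_derivative
           (- lam * f (u t) * u' t - lam * h t (u t))) (at t within {0..T}))"

end

theory Submission
  imports Defs
begin


lemma abs_cont_on_add:
  assumes "abs_cont_on S f" "abs_cont_on S g"
  shows "abs_cont_on S (\<lambda>x. f x + g x)"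
  unfolding abs_cont_on_def
proof (intro allI impI)
  fix e :: real assume e: "e > 0"
  obtain d1 where d1: "d1 > 0" "\<forall>n::nat. \<forall>a b. 
        (\<forall>i<n. a i \<in> S \<and> b i \<in> S \<and> a i \<le> b i) \<and>
        (\<forall>i<n. \<forall>j<n. i \<noteq> j \<longrightarrow> b i \<le> a j \<or> b j \<le> a i) \<and>
        (\<Sum>i<n. b i - a i) < d1
        \<longrightarrow> (\<Sum>i<n. \<bar>f (b i) - f (a i)\<bar>) < e/2"
    using assms(1)[unfolded abs_cont_on_def, rule_format, of "e/2"] e by auto
  obtain d2 where d2: "d2 > 0" "\<forall>n::nat. \<forall>a b. 
        (\<forall>i<n. a i \<in> S \<and> b i \<in> S \<and> a i \<le> b i) \<and>
        (\<forall>i<n. \<forall>j<n. i \<noteq> j \<longrightarrow> b i \<le> a j \<or> b j \<le> a i) \<and>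
        (\<Sum>i<n. b i - a i) < d2
        \<longrightarrow> (\<Sum>i<n. \<bar>g (b i) - g (a i)\<bar>) < e/2"
    using assms(2)[unfolded abs_cont_on_def, rule_format, of "e/2"] e by auto
  show "\<exists>d>0. \<forall>n::nat. \<forall>a b. 
        (\<forall>i<n. a i \<in> S \<and> b i \<in> S \<and> a i \<le> b i) \<and>
        (\<forall>i<n. \<forall>j<n. i \<noteq> j \<longrightarrow> b i \<le> a j \<or> b j \<le> a i) \<and>
        (\<Sum>i<n. b i - a i) < d
        \<longrightarrow> (\<Sum>i<n. \<bar>(f (b i) + g (b i)) - (f (a i) + g (a i))\<bar>) < e"
  proof (intro exI[of _ "min d1 d2"] conjI allI impI)
    show "min d1 d2 > 0" using d1 d2 by simp
    fix n :: nat and a b :: "nat \<Rightarrow> real"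
    assume H: "(\<forall>i<n. a i \<in> S \<and> b i \<in> S \<and> a i \<le> b i) \<and>
        (\<forall>i<n. \<forall>j<n. i \<noteq> j \<longrightarrow> b i \<le> a j \<or> b j \<le> a i) \<and>
        (\<Sum>i<n. b i - a i) < min d1 d2"
    have 1: "(\<Sum>i<n. \<bar>f (b i) - f (a i)\<bar>) < e/2" using d1(2)[rule_format, of n a b] H by simp
    have 2: "(\<Sum>i<n. \<bar>g (b i) - g (a i)\<bar>) < e/2" using d2(2)[rule_format, of n a b] H by simp
    have "(\<Sum>i<n. \<bar>(f (b i) + g (b i)) - (f (a i) + g (a i))\<bar>)
         \<le> (\<Sum>i<n. \<bar>f (b i) - f (a i)\<bar> + \<bar>g (b i) - g (a i)\<bar>)"
      by (rule sum_mono) (rule abs_triangle_ineq[THEN order.trans[rotated]], simp)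
    also have "\<dots> = (\<Sum>i<n. \<bar>f (b i) - f (a i)\<bar>) + (\<Sum>i<n. \<bar>g (b i) - g (a i)\<bar>)"
      by (simp add: sum.distrib)
    finally show "(\<Sum>i<n. \<bar>(f (b i) + g (b i)) - (f (a i) + g (a i))\<bar>) < e" using 1 2 by linarith
  qed
qed

lemma abs_cont_on_lipschitz:
  assumes B: "B > 0" and L: "\<And>x y. x \<in> S \<Longrightarrow> y \<in> S \<Longrightarrow> \<bar>g x - g y\<bar> \<le> B * \<bar>x - y\<bar>"
  shows "abs_cont_on S g"
  unfolding abs_cont_on_def
proof (intro allI impI)
  fix e :: real assume e: "e > 0"
  show "\<exists>d>0. \<forall>n::nat. \<forall>a b. 
        (\<forall>i<n. a i \<in> S \<and> b i \<in> S \<and> a i \<le> b i) \<and>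
        (\<forall>i<n. \<forall>j<n. i \<noteq> j \<longrightarrow> b i \<le> a j \<or> b j \<le> a i) \<and>
        (\<Sum>i<n. b i - a i) < d
        \<longrightarrow> (\<Sum>i<n. \<bar>g (b i) - g (a i)\<bar>) < e"
  proof (intro exI[of _ "e/B"] conjI allI impI)
    show "e/B > 0" using B e by simp
    fix n :: nat and a b :: "nat \<Rightarrow> real"
    assume H: "(\<forall>i<n. a i \<in> S \<and> b i \<in> S \<and> a i \<le> b i) \<and>
        (\<forall>i<n. \<forall>j<n. i \<noteq> j \<longrightarrow> b i \<le> a j \<or> b j \<le> a i) \<and>
        (\<Sum>i<n. b i - a i) < e/B"
    have "(\<Sum>i<n. \<bar>g (b i) - g (a i)\<bar>) \<le> (\<Sum>i<n. B * (b i - a i))"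
      proof (rule sum_mono)
      fix i assume "i \<in> {..<n}"
      then have "a i \<in> S" "b i \<in> S" "a i \<le> b i" using H by auto
      then show "\<bar>g (b i) - g (a i)\<bar> \<le> B * (b i - a i)" using L[of "b i" "a i"] by simp
    qed
    also have "\<dots> = B * (\<Sum>i<n. b i - a i)" by (simp add: sum_distrib_left)
    also have "\<dots> < B * (e/B)" using H B by (intro mult_strict_left_mono) auto
    also have "\<dots> = e" using B by simp
    finally show "(\<Sum>i<n. \<bar>g (b i) - g (a i)\<bar>) < e" .
  qed
qed

lemma abs_cont_on_subset:
  assumes "abs_cont_on S g" "T \<subseteq> S" shows "abs_cont_on T g"
  unfolding abs_cont_on_def
proof (intro allI impI)
  fix e :: real assume e: "e > 0"
  obtain d where d: "d > 0" "\<forall>n::nat. \<forall>a b. 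
        (\<forall>i<n. a i \<in> S \<and> b i \<in> S \<and> a i \<le> b i) \<and>
        (\<forall>i<n. \<forall>j<n. i \<noteq> j \<longrightarrow> b i \<le> a j \<or> b j \<le> a i) \<and>
        (\<Sum>i<n. b i - a i) < d
        \<longrightarrow> (\<Sum>i<n. \<bar>g (b i) - g (a i)\<bar>) < e"
    using assms(1)[unfolded abs_cont_on_def, rule_format, of e] e by auto
  show "\<exists>d>0. \<forall>n::nat. \<forall>a b. 
        (\<forall>i<n. a i \<in> T \<and> b i \<in> T \<and> a i \<le> b i) \<and>
        (\<forall>i<n. \<forall>j<n. i \<noteq> j \<longrightarrow> b i \<le> a j \<or> b j \<le> a i) \<and>
        (\<Sum>i<n. b i - a i) < d
        \<longrightarrow> (\<Sum>i<n. \<bar>g (b i) - g (a i)\<bar>) < e"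
  proof (intro exI[of _ d] conjI allI impI)
    fix n :: nat and a b :: "nat \<Rightarrow> real"
    assume H: "(\<forall>i<n. a i \<in> T \<and> b i \<in> T \<and> a i \<le> b i) \<and>
        (\<forall>i<n. \<forall>j<n. i \<noteq> j \<longrightarrow> b i \<le> a j \<or> b j \<le> a i) \<and>
        (\<Sum>i<n. b i - a i) < d"
    then show "(\<Sum>i<n. \<bar>g (b i) - g (a i)\<bar>) < e" using d(2)[rule_format, of n a b] assms(2) by blast
  qed (use d in auto)
qed



lemma deriv_right_le0:
  fixes g :: "real \<Rightarrow> real"
  assumes d: "(g has_real_derivative D) (at t within S)"
    and tb: "t < c" and sub: "{t<..c} \<subseteq> S"
    and le: "\<And>s. s \<in> {t<..c} \<Longrightarrow> g s \<le> g t"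
  shows "D \<le> 0"
proof -
  have "((\<lambda>y. (g y - g t) / (y - t)) \<longlongrightarrow> D) (at t within S)"
    using d by (simp add: has_field_derivative_iff)
  then have L: "((\<lambda>y. (g y - g t) / (y - t)) \<longlongrightarrow> D) (at t within {t<..c})"
    by (rule tendsto_within_subset) (use sub in auto)
  have nb: "at t within {t<..c} \<noteq> bot"
    using tb by (simp add: at_within_eq_bot_iff)
  have ev: "eventually (\<lambda>y. (g y - g t) / (y - t) \<le> 0) (at t within {t<..c})"
    unfolding eventually_at_filter
    by (intro always_eventually allI impI) (auto intro!: divide_nonpos_pos simp: le)
  show ?thesis using tendsto_upperbound[OF L ev nb] .
qed

lemma deriv_left_ge0:
  fixes g :: "real \<Rightarrow> real"
  assumes d: "(g has_real_derivative D) (at t within S)"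
    and ta: "c < t" and sub: "{c..<t} \<subseteq> S"
    and le: "\<And>s. s \<in> {c..<t} \<Longrightarrow> g s \<le> g t"
  shows "D \<ge> 0"
proof -
  have "((\<lambda>y. (g y - g t) / (y - t)) \<longlongrightarrow> D) (at t within S)"
    using d by (simp add: has_field_derivative_iff)
  then have L: "((\<lambda>y. (g y - g t) / (y - t)) \<longlongrightarrow> D) (at t within {c..<t})"
    by (rule tendsto_within_subset) (use sub in auto)
  have nb: "at t within {c..<t} \<noteq> bot"
    using ta by (simp add: at_within_eq_bot_iff)
  have ev: "eventually (\<lambda>y. (g y - g t) / (y - t) \<ge> 0) (at t within {c..<t})"
    unfolding eventually_at_filter
    by (intro always_eventually allI impI) (auto intro!: divide_nonpos_neg simp: le)
  show ?thesis using tendsto_lowerbound[OF L ev nb] .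
qed

lemma last_cross:
  fixes u u' :: "real \<Rightarrow> real"
  assumes der: "\<forall>t\<in>{0..T}. (u has_real_derivative u' t) (at t within {0..T})"
    and ab: "a \<le> b" "0 \<le> a" "b \<le> T"
    and ua: "u a \<ge> s" and ub: "u b \<le> s" and ub': "u b < s \<or> u' b \<le> 0"
  shows "\<exists>t2\<in>{a..b}. u t2 = s \<and> u' t2 \<le> 0"
proof -
  have cont: "continuous_on {0..T} u"
    using der by (intro DERIV_continuous_on) auto
  then have contab: "continuous_on {a..b} u"
    by (rule continuous_on_subset) (use ab in auto)
  define A where "A = {a..b} \<inter> u -` {s..}"
  have clA: "closed A" unfolding A_def
    by (rule continuous_closed_preimage[OF contab]) auto
  have aA: "a \<in> A" using ab ua by (auto simp: A_def)
  have bdd: "bdd_above A" unfolding A_def by (rule bdd_aboveI[of _ b]) auto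
  define t2 where "t2 = Sup A"
  have t2A: "t2 \<in> A" unfolding t2_def using closed_contains_Sup[OF _ bdd clA] aA by auto
  have t2ub: "\<And>\<tau>. \<tau> \<in> A \<Longrightarrow> \<tau> \<le> t2" unfolding t2_def using bdd by (simp add: cSup_upper)
  have t2ab: "t2 \<in> {a..b}" "u t2 \<ge> s" using t2A by (auto simp: A_def)
  show ?thesis
  proof (cases "t2 = b")
    case True
    then show ?thesis using t2ab ub ub' by force
  next
    case False
    then have tb: "t2 < b" using t2ab by auto
    have less: "u \<tau> < s" if "\<tau> \<in> {t2<..b}" for \<tau>
    proof (rule ccontr)
      assume "\<not> u \<tau> < s"
      then have "\<tau> \<in> A" using that t2ab by (auto simp: A_def)
      then show False using t2ub[of \<tau>] that by auto
    qed
    have "(u \<longlongrightarrow> u t2) (at t2 within {0..T})"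
      using cont t2ab ab by (auto simp: continuous_on_def)
    then have L: "(u \<longlongrightarrow> u t2) (at t2 within {t2<..b})"
      by (rule tendsto_within_subset) (use t2ab ab in auto)
    have nb: "at t2 within {t2<..b} \<noteq> bot"
      using tb by (simp add: at_within_eq_bot_iff)
    have ev: "eventually (\<lambda>y. u y \<le> s) (at t2 within {t2<..b})"
      unfolding eventually_at_filter
      by (intro always_eventually allI impI) (use less in force)
    have "u t2 \<le> s" using tendsto_upperbound[OF L ev nb] .
    then have eq: "u t2 = s" using t2ab by auto
    have "u' t2 \<le> 0"
    proof (rule deriv_right_le0[of u "u' t2" t2 "{0..T}" b])
      show "(u has_real_derivative u' t2) (at t2 within {0..T})" using der t2ab ab by auto
      show "t2 < b" by fact
      show "{t2<..b} \<subseteq> {0..T}" using t2ab ab by auto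
      fix \<tau> assume "\<tau> \<in> {t2<..b}" then show "u \<tau> \<le> u t2" using less eq by force
    qed
    then show ?thesis using eq t2ab by auto
  qed
qed

lemma cross:
  fixes u u' :: "real \<Rightarrow> real"
  assumes T: "0 < T"
    and der: "\<forall>t\<in>{0..T}. (u has_real_derivative u' t) (at t within {0..T})"
    and per: "u 0 = u T"
    and t: "t \<in> {0..T}"
  shows "\<exists>t2\<in>{0..T}. u t2 = u t \<and> u' t2 \<le> 0"
proof -
  have cont: "continuous_on {0..T} u"
    using der by (intro DERIV_continuous_on) auto
  obtain M where M: "M \<in> {0..T}" "\<forall>y\<in>{0..T}. u y \<le> u M"
    using continuous_attains_sup[OF compact_Icc _ cont] T by auto
  obtain m0 where m0: "m0 \<in> {0..T}" "\<forall>y\<in>{0..T}. u m0 \<le> u y"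
    using continuous_attains_inf[OF compact_Icc _ cont] T by auto
  obtain m where m: "m \<in> {0<..T}" "\<forall>y\<in>{0..T}. u m \<le> u y"
  proof (cases "m0 = 0")
    case True then show ?thesis using that[of T] m0 per T by auto
  next
    case False then show ?thesis using that[of m0] m0 by auto
  qed
  have dm: "u' m \<le> 0"
  proof -
    have "((\<lambda>x. - u x) has_real_derivative - u' m) (at m within {0..T})"
      using der m by (auto intro!: derivative_eq_intros)
    then have "- u' m \<ge> 0"
      by (rule deriv_left_ge0[where c=0]) (use m in auto)
    then show ?thesis by simp
  qed
  let ?s = "u t"
  have sM: "u M \<ge> ?s" and sm: "u m \<le> ?s" using M m t by auto
  show ?thesis
  proof (cases "M \<le> m")
    case True
    from last_cross[OF der True _ _ sM sm] M m dm show ?thesis by auto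
  next
    case False
    show ?thesis
    proof (cases "u 0 \<ge> ?s")
      case True
      from last_cross[OF der _ _ _ True sm] m dm show ?thesis by auto
    next
      case F2: False
      from last_cross[OF der _ _ _ sM, of T] M F2 per show ?thesis by auto
    qed
  qed
qed



lemma intervals_disj:
  fixes x1 y1 x2 y2 :: real
  assumes "{x1<..<y1} \<inter> {x2<..<y2} = {}" "x1 < y1" "x2 < y2"
  shows "y1 \<le> x2 \<or> y2 \<le> x1"
proof (rule ccontr)
  assume "\<not> (y1 \<le> x2 \<or> y2 \<le> x1)"
  then have "(max x1 x2 + min y1 y2)/2 \<in> {x1<..<y1} \<inter> {x2<..<y2}" using assms(2,3)
    by (auto simp: max_def min_def)
  then show False using assms(1) by blast
qed

lemma ac_deriv_le_integral:
  fixes w g :: "real \<Rightarrow> real"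
  assumes ab: "a \<le> b"
    and ac: "abs_cont_on {a..b} w"
    and gint: "g integrable_on {a..b}"
    and gnn: "\<forall>t\<in>{a..b}. g t \<ge> 0"
    and der: "AE t in lebesgue. t \<in> {a..b} \<longrightarrow>
       (\<exists>D. (w has_real_derivative D) (at t within {a..b}) \<and> D \<le> g t)"
  shows "w b - w a \<le> integral {a..b} g"
proof -
  obtain N where N: "{x \<in> space lebesgue. \<not> (x \<in> {a..b} \<longrightarrow>
       (\<exists>D. (w has_real_derivative D) (at x within {a..b}) \<and> D \<le> g x))} \<subseteq> N"
    "emeasure lebesgue N = 0" "N \<in> sets lebesgue"
    using der by (rule AE_E)
  have goodD: "\<exists>D. (w has_real_derivative D) (at t within {a..b}) \<and> D \<le> g t"
    if "t \<in> {a..b}" "t \<notin> N" for t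
    using N(1) that by auto
  have Nnull: "N \<in> null_sets lebesgue" using N(2,3) by auto
  show ?thesis
  proof (rule field_le_epsilon)
    fix \<epsilon> :: real assume \<epsilon>: "\<epsilon> > 0"
    define e where "e = \<epsilon> / (3 + (b - a))"
    have e: "e > 0" using \<epsilon> ab by (simp add: e_def)
    have eeq: "e * (3 + (b - a)) = \<epsilon>" using ab by (simp add: e_def)
    obtain d where d: "d > 0" "\<forall>n::nat. \<forall>a' b'. 
        (\<forall>i<n. a' i \<in> {a..b} \<and> b' i \<in> {a..b} \<and> a' i \<le> b' i) \<and>
        (\<forall>i<n. \<forall>j<n. i \<noteq> j \<longrightarrow> b' i \<le> a' j \<or> b' j \<le> a' i) \<and>
        (\<Sum>i<n. b' i - a' i) < d
        \<longrightarrow> (\<Sum>i<n. \<bar>w (b' i) - w (a' i)\<bar>) < e"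
      using ac[unfolded abs_cont_on_def, rule_format, of e] e by auto
    obtain U where U: "open U" "N \<subseteq> U" "(U - N) \<in> lmeasurable" "emeasure lebesgue (U - N) < ennreal d"
      using sets_lebesgue_outer_open[OF N(3) d(1)] by blast
    have Usets: "U \<in> sets lebesgue" using U(1) by simp
    have emU: "emeasure lebesgue U < ennreal d"
      using U(4) emeasure_Diff_null_set[OF Nnull Usets] by simp
    have "emeasure lebesgue U < \<infinity>" using emU by (rule order.strict_trans) simp
    then have Umeas: "U \<in> lmeasurable"
      unfolding fmeasurable_def using Usets by blast
    have Ud: "measure lebesgue U < d"
    proof -
      have "ennreal (measure lebesgue U) < ennreal d" using emU emeasure_eq_measure2[OF Umeas] by metis
      then show ?thesis using ennreal_less_iff[OF measure_nonneg] by blast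
    qed
    have "(g has_integral integral {a..b} g) (cbox a b)"
      using gint by (simp add: box_real has_integral_integral)
    then obtain \<gamma>1 where \<gamma>1: "gauge \<gamma>1" "\<And>\<D>. \<D> tagged_division_of (cbox a b) \<Longrightarrow> \<gamma>1 fine \<D> \<Longrightarrow>
        norm ((\<Sum>(x, k)\<in>\<D>. Henstock_Kurzweil_Integration.content k *\<^sub>R g x) - integral {a..b} g) < e"
      unfolding has_integral using e by meson
    have "\<forall>t. \<exists>\<delta>>0. (t \<in> {a..b} \<and> t \<notin> N \<longrightarrow> (\<exists>D. D \<le> g t \<and>
          (\<forall>y\<in>{a..b}. \<bar>y - t\<bar> < \<delta> \<longrightarrow> \<bar>w y - w t - D * (y - t)\<bar> \<le> e * \<bar>y - t\<bar>)))
          \<and> (t \<in> N \<longrightarrow> ball t \<delta> \<subseteq> U)"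
    proof
      fix t
      show "\<exists>\<delta>>0. (t \<in> {a..b} \<and> t \<notin> N \<longrightarrow> (\<exists>D. D \<le> g t \<and>
          (\<forall>y\<in>{a..b}. \<bar>y - t\<bar> < \<delta> \<longrightarrow> \<bar>w y - w t - D * (y - t)\<bar> \<le> e * \<bar>y - t\<bar>)))
          \<and> (t \<in> N \<longrightarrow> ball t \<delta> \<subseteq> U)"
      proof (cases "t \<in> N")
        case True
        then obtain \<delta> where "\<delta> > 0" "ball t \<delta> \<subseteq> U" using U(1,2) open_contains_ball by blast
        then show ?thesis using True by blast
      next
        case False
        show ?thesis
        proof (cases "t \<in> {a..b}")
          case True
          obtain D where D: "(w has_real_derivative D) (at t within {a..b})" "D \<le> g t"
            using goodD[OF True False] by blast
          then have "(w has_derivative (\<lambda>x. D * x)) (at t within {a..b})"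
            by (simp add: has_field_derivative_def)
          then obtain \<delta> where "\<delta> > 0" "\<forall>y\<in>{a..b}. norm (y - t) < \<delta> \<longrightarrow>
               norm (w y - w t - D * (y - t)) \<le> e * norm (y - t)"
            unfolding has_derivative_within_alt using e by blast
          then show ?thesis using False D(2) by (auto simp: real_norm_def)
        next
          case F2: False
          show ?thesis using False F2 by (intro exI[of _ 1]) auto
        qed
      qed
    qed
    then obtain \<delta> where \<delta>: "\<And>t. \<delta> t > 0"
      "\<And>t. t \<in> {a..b} \<Longrightarrow> t \<notin> N \<Longrightarrow> (\<exists>D. D \<le> g t \<and>
          (\<forall>y\<in>{a..b}. \<bar>y - t\<bar> < \<delta> t \<longrightarrow> \<bar>w y - w t - D * (y - t)\<bar> \<le> e * \<bar>y - t\<bar>))"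
      "\<And>t. t \<in> N \<Longrightarrow> ball t (\<delta> t) \<subseteq> U"
      by metis
    define \<gamma> where "\<gamma> t = \<gamma>1 t \<inter> ball t (\<delta> t)" for t
    have "gauge \<gamma>" unfolding \<gamma>_def
      using \<gamma>1(1) \<delta>(1) by (intro gauge_Int gauge_ball_dependent) auto
    then obtain p where p: "p tagged_division_of {a..b}" "\<gamma> fine p"
      using fine_division_exists_real by blast
    have pfin: "finite p" using p(1) by blast
    have p\<gamma>1: "\<gamma>1 fine p" and pball: "\<And>t K. (t, K) \<in> p \<Longrightarrow> K \<subseteq> ball t (\<delta> t)"
      using p(2) by (auto simp: fine_def \<gamma>_def)
    have pK: "\<exists>x y. K = {x..y} \<and> x \<le> y \<and> t \<in> K \<and> K \<subseteq> {a..b}" if tK: "(t, K) \<in> p" for t K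
    proof -
      obtain x y where "K = cbox x y" using p(1) tK by (meson tagged_division_ofD(4))
      moreover have "t \<in> K" "K \<subseteq> {a..b}" using p(1) tK by (meson tagged_division_ofD)+
      ultimately show ?thesis by (intro exI[of _ x] exI[of _ y]) auto
    qed
    have riem: "(\<Sum>(t, K)\<in>p. Henstock_Kurzweil_Integration.content K * g t) < integral {a..b} g + e"
      using \<gamma>1(2)[OF p(1)[unfolded box_real(2)[symmetric]] p\<gamma>1] by (simp add: real_norm_def)
    have tele: "(\<Sum>(t, K)\<in>p. w (Sup K) - w (Inf K)) = w b - w a"
      using additive_tagged_division_1[OF ab p(1)] .
    define P1 where "P1 = {(t, K) \<in> p. t \<notin> N}"
    define P2 where "P2 = {(t, K) \<in> p. t \<in> N}"
    have split: "(\<Sum>(t, K)\<in>p. w (Sup K) - w (Inf K)) =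
       (\<Sum>(t, K)\<in>P1. w (Sup K) - w (Inf K)) + (\<Sum>(t, K)\<in>P2. w (Sup K) - w (Inf K))"
    proof -
      have "p = P1 \<union> P2" "P1 \<inter> P2 = {}" by (auto simp: P1_def P2_def)
      moreover have "finite P1" by (rule finite_subset[OF _ pfin]) (force simp: P1_def)
      moreover have "finite P2" by (rule finite_subset[OF _ pfin]) (force simp: P2_def)
      ultimately show ?thesis by (simp add: sum.union_disjoint)
    qed
    have good: "w (Sup K) - w (Inf K) \<le> Henstock_Kurzweil_Integration.content K * g t + e * Henstock_Kurzweil_Integration.content K" if tK: "(t, K) \<in> P1" for t K
    proof -
      have tp: "(t, K) \<in> p" "t \<notin> N" using tK by (auto simp: P1_def)
      obtain x y where K: "K = {x..y}" "x \<le> y" "t \<in> K" "K \<subseteq> {a..b}" using pK[OF tp(1)] by blast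
      have tab: "t \<in> {a..b}" using K by auto
      obtain D where D: "D \<le> g t"
          "\<forall>y\<in>{a..b}. \<bar>y - t\<bar> < \<delta> t \<longrightarrow> \<bar>w y - w t - D * (y - t)\<bar> \<le> e * \<bar>y - t\<bar>"
        using \<delta>(2)[OF tab tp(2)] by blast
      have "x \<in> K" "y \<in> K" using K by auto
      then have xy: "x \<in> ball t (\<delta> t)" "y \<in> ball t (\<delta> t)" using pball[OF tp(1)] by auto
      have "x \<in> {a..b}" "y \<in> {a..b}" using K by auto
      then have 1: "\<bar>w y - w t - D * (y - t)\<bar> \<le> e * \<bar>y - t\<bar>"
        and 2: "\<bar>w x - w t - D * (x - t)\<bar> \<le> e * \<bar>x - t\<bar>"
        using D(2) xy by (auto simp: dist_real_def abs_minus_commute)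
      have "x \<le> t" "t \<le> y" using K by auto
      then have "w y - w x \<le> (D + e) * (y - x)" using 1 2
        by (auto simp: abs_if algebra_simps split: if_splits)
      also have "\<dots> \<le> (g t + e) * (y - x)" using D(1) K(2) by (intro mult_right_mono) auto
      finally show ?thesis using K by (simp add: algebra_simps)
    qed
    have nonneg: "0 \<le> Henstock_Kurzweil_Integration.content K * g t" if tK: "(t, K) \<in> p" for t K
    proof -
      obtain x y where K: "K = {x..y}" "x \<le> y" "t \<in> K" "K \<subseteq> {a..b}" using pK[OF tK] by blast
      then show ?thesis using gnn by auto
    qed
    have sum1: "(\<Sum>(t, K)\<in>P1. w (Sup K) - w (Inf K)) \<le> integral {a..b} g + e + e * (b - a)"
    proof -
      have "(\<Sum>(t, K)\<in>P1. w (Sup K) - w (Inf K)) \<le> (\<Sum>(t, K)\<in>P1. Henstock_Kurzweil_Integration.content K * g t + e * Henstock_Kurzweil_Integration.content K)"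
        by (rule sum_mono) (use good in auto)
      also have "\<dots> = (\<Sum>(t, K)\<in>P1. Henstock_Kurzweil_Integration.content K * g t) + e * (\<Sum>(t, K)\<in>P1. Henstock_Kurzweil_Integration.content K)"
        by (simp add: sum.distrib sum_distrib_left split_def)
      also have "\<dots> \<le> (\<Sum>(t, K)\<in>p. Henstock_Kurzweil_Integration.content K * g t) + e * (\<Sum>(t, K)\<in>p. Henstock_Kurzweil_Integration.content K)"
      proof (intro add_mono mult_left_mono)
        show "(\<Sum>(t, K)\<in>P1. Henstock_Kurzweil_Integration.content K * g t) \<le> (\<Sum>(t, K)\<in>p. Henstock_Kurzweil_Integration.content K * g t)"
          by (rule sum_mono2[OF pfin]) (use nonneg in \<open>auto simp: P1_def\<close>)
        show "(\<Sum>(t, K)\<in>P1. Henstock_Kurzweil_Integration.content K) \<le> (\<Sum>(t, K)\<in>p. Henstock_Kurzweil_Integration.content K)"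
          by (rule sum_mono2[OF pfin]) (auto simp: P1_def)
      qed (use e in auto)
      also have "(\<Sum>(t, K)\<in>p. Henstock_Kurzweil_Integration.content K) = b - a"
        using additive_content_tagged_division[OF p(1)[unfolded box_real(2)[symmetric]]] ab by simp
      finally show ?thesis using riem by linarith
    qed
    define P3 where "P3 = {(t, K) \<in> P2. Henstock_Kurzweil_Integration.content K > 0}"
    have fin3: "finite P3" by (rule finite_subset[OF _ pfin]) (force simp: P2_def P3_def)
    have sum23: "(\<Sum>(t, K)\<in>P2. w (Sup K) - w (Inf K)) = (\<Sum>(t, K)\<in>P3. w (Sup K) - w (Inf K))"
    proof (rule sum.mono_neutral_right)
      show "finite P2" by (rule finite_subset[OF _ pfin]) (force simp: P2_def)
      show "P3 \<subseteq> P2" by (auto simp: P3_def)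
      show "\<forall>i\<in>P2 - P3. (case i of (t, K) \<Rightarrow> w (Sup K) - w (Inf K)) = 0"
      proof
        fix i assume i: "i \<in> P2 - P3"
        obtain t K where tK: "i = (t, K)" by force
        then have "(t, K) \<in> p" "\<not> Henstock_Kurzweil_Integration.content K > 0" using i by (auto simp: P2_def P3_def)
        then obtain x y where "K = {x..y}" "x \<le> y" "\<not> y - x > 0" using pK by fastforce
        then show "(case i of (t, K) \<Rightarrow> w (Sup K) - w (Inf K)) = 0" using tK by auto
      qed
    qed
    have P3K: "\<exists>x y. K = {x..y} \<and> x < y \<and> K \<subseteq> {a..b} \<and> K \<subseteq> U" if tK: "(t, K) \<in> P3" for t K
    proof -
      have tp: "(t, K) \<in> p" "t \<in> N" "Henstock_Kurzweil_Integration.content K > 0" using tK by (auto simp: P2_def P3_def)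
      obtain x y where K: "K = {x..y}" "x \<le> y" "t \<in> K" "K \<subseteq> {a..b}" using pK[OF tp(1)] by blast
      have "K \<subseteq> U" using pball[OF tp(1)] \<delta>(3)[OF tp(2)] by blast
      then show ?thesis using K tp(3) by (intro exI[of _ x] exI[of _ y]) auto
    qed
    have disj3: "Sup K1 \<le> Inf K2 \<or> Sup K2 \<le> Inf K1"
      if H3: "(t1, K1) \<in> P3" "(t2, K2) \<in> P3" "(t1, K1) \<noteq> (t2, K2)" for t1 K1 t2 K2
    proof -
      obtain x1 y1 where K1: "K1 = {x1..y1}" "x1 < y1" using P3K[OF H3(1)] by blast
      obtain x2 y2 where K2: "K2 = {x2..y2}" "x2 < y2" using P3K[OF H3(2)] by blast
      have "(t1, K1) \<in> p" "(t2, K2) \<in> p" using H3 by (auto simp: P2_def P3_def)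
      then have "interior K1 \<inter> interior K2 = {}" using p(1) H3(3) by (meson tagged_division_ofD(5))
      then have "y1 \<le> x2 \<or> y2 \<le> x1" using K1 K2 by (intro intervals_disj) auto
      then show ?thesis using K1 K2 by auto
    qed
    have sum3: "(\<Sum>(t, K)\<in>P3. \<bar>w (Sup K) - w (Inf K)\<bar>) < e"
    proof -
      define n where "n = card P3"
      obtain hh where hh: "bij_betw hh {..<n} P3"
        using ex_bij_betw_nat_finite[OF fin3] by (auto simp: n_def atLeast0LessThan)
      define a' where "a' i = Inf (snd (hh i))" for i
      define b' where "b' i = Sup (snd (hh i))" for i
      have hhP: "i < n \<Longrightarrow> hh i \<in> P3" for i using hh by (auto simp: bij_betw_def)
      have ival: "\<exists>x y. snd (hh i) = {x..y} \<and> x < y \<and> snd (hh i) \<subseteq> {a..b} \<and> snd (hh i) \<subseteq> U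
                 \<and> a' i = x \<and> b' i = y" if iN: "i < n" for i
      proof -
        obtain t K where tK: "hh i = (t, K)" by force
        obtain x y where "K = {x..y} \<and> x < y \<and> K \<subseteq> {a..b} \<and> K \<subseteq> U"
          using P3K[of t K] hhP[OF iN] tK by auto
        then show ?thesis using tK by (auto simp: a'_def b'_def)
      qed
      have c1: "\<forall>i<n. a' i \<in> {a..b} \<and> b' i \<in> {a..b} \<and> a' i \<le> b' i"
      proof (intro allI impI)
        fix i assume "i < n"
        then obtain x y where "snd (hh i) = {x..y}" "x < y" "snd (hh i) \<subseteq> {a..b}" "a' i = x" "b' i = y"
          using ival by blast
        then show "a' i \<in> {a..b} \<and> b' i \<in> {a..b} \<and> a' i \<le> b' i" by auto
      qed
      have c2: "\<forall>i<n. \<forall>j<n. i \<noteq> j \<longrightarrow> b' i \<le> a' j \<or> b' j \<le> a' i"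
      proof (intro allI impI)
        fix i j assume ij: "i < n" "j < n" "i \<noteq> j"
        then have ne: "hh i \<noteq> hh j" using hh by (auto simp: bij_betw_def inj_on_def)
        obtain t1 K1 where 1: "hh i = (t1, K1)" by force
        obtain t2 K2 where 2: "hh j = (t2, K2)" by force
        show "b' i \<le> a' j \<or> b' j \<le> a' i"
          using disj3[of t1 K1 t2 K2] hhP[OF ij(1)] hhP[OF ij(2)] ne 1 2 by (auto simp: a'_def b'_def)
      qed
      have meas_eq: "(\<Sum>i<n. b' i - a' i) = measure lebesgue (\<Union> (snd ` P3))"
      proof -
        have "(\<Sum>i<n. b' i - a' i) = (\<Sum>i<n. measure lebesgue (snd (hh i)))"
        proof (rule sum.cong[OF refl])
          fix i assume "i \<in> {..<n}"
          then obtain x y where "snd (hh i) = {x..y}" "x < y" "a' i = x" "b' i = y"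
            using ival by blast
          then show "b' i - a' i = measure lebesgue (snd (hh i))" by simp
        qed
        also have "\<dots> = (\<Sum>q\<in>P3. measure lebesgue (snd q))"
          using sum.reindex_bij_betw[OF hh, of "\<lambda>q. measure lebesgue (snd q)"] by simp
        also have "\<dots> = measure lebesgue (\<Union> (snd ` P3))"
        proof (rule measure_negligible_finite_Union_image[symmetric, OF fin3])
          fix q assume "q \<in> P3"
          then obtain x y where "snd q = {x..y}" using P3K[of "fst q" "snd q"] by auto
          then show "snd q \<in> lmeasurable" by simp
        next
          show "pairwise (\<lambda>q r. negligible (snd q \<inter> snd r)) P3"
          proof (rule pairwiseI)
            fix q r assume qr: "q \<in> P3" "r \<in> P3" "q \<noteq> r"
            obtain x1 y1 where K1: "snd q = {x1..y1}" "x1 < y1" using P3K[of "fst q" "snd q"] qr by auto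
            obtain x2 y2 where K2: "snd r = {x2..y2}" "x2 < y2" using P3K[of "fst r" "snd r"] qr by auto
            have "Sup (snd q) \<le> Inf (snd r) \<or> Sup (snd r) \<le> Inf (snd q)"
              using disj3[of "fst q" "snd q" "fst r" "snd r"] qr by auto
            then have "y1 \<le> x2 \<or> y2 \<le> x1" using K1 K2 by auto
            then have "snd q \<inter> snd r \<subseteq> {y1, y2}" using K1 K2 by auto
            then show "negligible (snd q \<inter> snd r)"
              by (rule negligible_subset[rotated]) auto
          qed
        qed
        finally show ?thesis .
      qed
      have "\<Union> (snd ` P3) \<subseteq> U" using P3K by force
      moreover have "\<Union> (snd ` P3) \<in> sets lebesgue"
      proof (rule sets.finite_Union)
        show "finite (snd ` P3)" using fin3 by simp
        show "snd ` P3 \<subseteq> sets lebesgue"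
        proof
          fix K assume "K \<in> snd ` P3"
          then obtain t where "(t, K) \<in> P3" by force
          then obtain x y where "K = {x..y}" using P3K by blast
          then show "K \<in> sets lebesgue" by simp
        qed
      qed
      ultimately have "measure lebesgue (\<Union> (snd ` P3)) \<le> measure lebesgue U"
        using Umeas by (intro measure_mono_fmeasurable) auto
      then have c3: "(\<Sum>i<n. b' i - a' i) < d" using meas_eq Ud by linarith
      have "(\<Sum>i<n. \<bar>w (b' i) - w (a' i)\<bar>) < e"
        using d(2)[rule_format, of n a' b'] c1 c2 c3 by blast
      also have "(\<Sum>i<n. \<bar>w (b' i) - w (a' i)\<bar>) = (\<Sum>q\<in>P3. \<bar>w (Sup (snd q)) - w (Inf (snd q))\<bar>)"
        using sum.reindex_bij_betw[OF hh, of "\<lambda>q. \<bar>w (Sup (snd q)) - w (Inf (snd q))\<bar>"]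
        by (simp add: a'_def b'_def)
      finally show ?thesis by (simp add: split_def)
    qed
    have "(\<Sum>(t, K)\<in>P3. w (Sup K) - w (Inf K)) \<le> (\<Sum>(t, K)\<in>P3. \<bar>w (Sup K) - w (Inf K)\<bar>)"
      by (rule sum_mono) auto
    then have "w b - w a \<le> integral {a..b} g + e + e * (b - a) + e"
      using tele split sum1 sum23 sum3 by linarith
    also have "\<dots> \<le> integral {a..b} g + \<epsilon>"
      using eeq e by (simp add: algebra_simps)
    finally show "w b - w a \<le> integral {a..b} g + \<epsilon>" .
  qed
qed



lemma deriv_lipschitz:
  fixes g g' :: "real \<Rightarrow> real"
  assumes "\<And>t. t \<in> {a..b} \<Longrightarrow> (g has_real_derivative g' t) (at t within {a..b})"
    and "\<And>t. t \<in> {a..b} \<Longrightarrow> \<bar>g' t\<bar> \<le> B"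
    and "x \<in> {a..b}" "y \<in> {a..b}"
  shows "\<bar>g x - g y\<bar> \<le> B * \<bar>x - y\<bar>"
  using field_differentiable_bound[of "{a..b}" g g' B x y] assms by auto

lemma deriv_bound:
  fixes \<phi> f u u' \<gamma> :: "real \<Rightarrow> real" and h' :: "real \<Rightarrow> real \<Rightarrow> real"
  assumes T: "T > 0"
    and phi_incr: "strict_mono \<phi>"
    and phi0: "\<phi> 0 = 0"
    and f_cont: "continuous_on UNIV f"
    and gint: "\<gamma> integrable_on {0..T}"
    and gamma_nonneg: "\<forall>t\<in>{0..T}. \<gamma> t \<ge> 0"
    and hl: "AE t in lebesgue. t \<in> {0..T} \<longrightarrow> (\<forall>x. h' t x \<ge> - \<gamma> t)"
    and lam: "lam \<in> {0<..1}"
    and sol: "periodic_solution \<phi> f h' T lam u u'"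
  shows "\<forall>t\<in>{0..T}. \<bar>\<phi> (u' t)\<bar> \<le> integral {0..T} \<gamma>"
proof -
  note sol' = sol[unfolded periodic_solution_def]
  have der: "\<forall>t\<in>{0..T}. (u has_real_derivative u' t) (at t within {0..T})"
    and contu': "continuous_on {0..T} u'" and per1: "u 0 = u T" and per2: "u' 0 = u' T"
    and acphi: "abs_cont_on {0..T} (\<lambda>t. \<phi> (u' t))"
    and aed: "AE t in lebesgue. t \<in> {0..T} \<longrightarrow>
        ((\<lambda>s. \<phi> (u' s)) has_real_derivative
           (- lam * f (u t) * u' t - lam * h' t (u t))) (at t within {0..T})"
    using sol' by auto
  have contu: "continuous_on {0..T} u"
    using der by (intro DERIV_continuous_on) auto
  have "bounded (u ` {0..T})"
    using compact_imp_bounded[OF compact_continuous_image[OF contu compact_Icc]] .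
  then obtain B0 where "\<forall>x\<in>u ` {0..T}. \<bar>x\<bar> \<le> B0" unfolding bounded_iff by auto
  then have B0: "\<And>t. t \<in> {0..T} \<Longrightarrow> \<bar>u t\<bar> \<le> B0" by blast
  define c where "c = - B0 - 1"
  define d where "d = B0 + 1"
  have ucd: "u t \<in> interior {c..d}" if "t \<in> {0..T}" for t
    using B0[OF that] by (auto simp: c_def d_def)
  obtain F where F: "\<And>x. x \<in> {c..d} \<Longrightarrow> (F has_vector_derivative f x) (at x within {c..d})"
    using antiderivative_continuous[of c d f] continuous_on_subset[OF f_cont] by blast
  have dF: "(F has_real_derivative f (u t)) (at (u t))" if "t \<in> {0..T}" for t
  proof -
    have "(F has_vector_derivative f (u t)) (at (u t) within {c..d})"
      using F ucd[OF that] interior_subset by blast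
    then show ?thesis
      using at_within_interior[OF ucd[OF that]]
      by (simp add: has_real_derivative_iff_has_vector_derivative)
  qed
  have dFu: "((\<lambda>t. F (u t)) has_real_derivative (f (u t) * u' t)) (at t within {0..T})"
    if "t \<in> {0..T}" for t
    using DERIV_chain2[of F "f (u t)" u t "u' t" "{0..T}", OF dF[OF that]] der that by blast
  have lampos: "lam > 0" "lam \<le> 1" using lam by auto
  define w where "w t = \<phi> (u' t) + lam * F (u t)" for t
  have contg: "continuous_on {0..T} (\<lambda>t. lam * (f (u t) * u' t))"
    by (intro continuous_intros continuous_on_compose2[OF f_cont contu] contu') auto
  have "bounded ((\<lambda>t. lam * (f (u t) * u' t)) ` {0..T})"
    using compact_imp_bounded[OF compact_continuous_image[OF contg compact_Icc]] .
  then obtain B1 where "\<forall>x\<in>(\<lambda>t. lam * (f (u t) * u' t)) ` {0..T}. \<bar>x\<bar> \<le> B1"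
    unfolding bounded_iff by auto
  then have B1: "\<And>t. t \<in> {0..T} \<Longrightarrow> \<bar>lam * (f (u t) * u' t)\<bar> \<le> B1" by blast
  have acF: "abs_cont_on {0..T} (\<lambda>t. lam * F (u t))"
  proof (rule abs_cont_on_lipschitz[of "\<bar>B1\<bar> + 1"])
    fix x y assume xy: "x \<in> {0..T}" "y \<in> {0..T}"
    have "\<bar>lam * F (u x) - lam * F (u y)\<bar> \<le> B1 * \<bar>x - y\<bar>"
    proof (rule deriv_lipschitz[OF _ _ xy])
      fix t assume t: "t \<in> {0..T}"
      show "((\<lambda>t. lam * F (u t)) has_real_derivative lam * (f (u t) * u' t)) (at t within {0..T})"
        using dFu[OF t] by (intro DERIV_cmult)
      show "\<bar>lam * (f (u t) * u' t)\<bar> \<le> B1" using B1[OF t] .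
    qed
    also have "\<dots> \<le> (\<bar>B1\<bar> + 1) * \<bar>x - y\<bar>" by (intro mult_right_mono) auto
    finally show "\<bar>lam * F (u x) - lam * F (u y)\<bar> \<le> (\<bar>B1\<bar> + 1) * \<bar>x - y\<bar>" .
  qed auto
  have acw: "abs_cont_on {0..T} w"
    unfolding w_def by (rule abs_cont_on_add[OF acphi acF])
  have aew: "AE t in lebesgue. t \<in> {0..T} \<longrightarrow>
       (\<exists>D. (w has_real_derivative D) (at t within {0..T}) \<and> D \<le> \<gamma> t)"
    using aed hl
  proof eventually_elim
    case (elim t)
    show ?case
    proof
      assume t: "t \<in> {0..T}"
      let ?D = "(- lam * f (u t) * u' t - lam * h' t (u t)) + lam * (f (u t) * u' t)"
      have "(w has_real_derivative ?D) (at t within {0..T})"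
        unfolding w_def using elim(1) t dFu[OF t] by (intro DERIV_add DERIV_cmult) auto
      moreover have "?D \<le> \<gamma> t"
      proof -
        have "?D = - lam * h' t (u t)" by (simp add: algebra_simps)
        also have "\<dots> \<le> lam * \<gamma> t"
        proof -
          have "- \<gamma> t \<le> h' t (u t)" using elim(2) t by blast
          then have "- h' t (u t) \<le> \<gamma> t" by linarith
          then have "lam * (- h' t (u t)) \<le> lam * \<gamma> t" using lampos by (intro mult_left_mono) auto
          then show ?thesis by simp
        qed
        also have "\<dots> \<le> \<gamma> t" using gamma_nonneg t lampos by (simp add: mult_left_le_one_le)
        finally show ?thesis .
      qed
      ultimately show "\<exists>D. (w has_real_derivative D) (at t within {0..T}) \<and> D \<le> \<gamma> t" by blast
    qed
  qed
  have incr: "w y - w x \<le> integral {x..y} \<gamma>" if xy: "0 \<le> x" "x \<le> y" "y \<le> T" for x y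
  proof (rule ac_deriv_le_integral)
    show "x \<le> y" by fact
    show "abs_cont_on {x..y} w" using acw by (rule abs_cont_on_subset) (use xy in auto)
    show "\<gamma> integrable_on {x..y}" using gint by (rule integrable_on_subinterval) (use xy in auto)
    show "\<forall>t\<in>{x..y}. 0 \<le> \<gamma> t" using gamma_nonneg xy by auto
    show "AE t in lebesgue. t \<in> {x..y} \<longrightarrow>
       (\<exists>D. (w has_real_derivative D) (at t within {x..y}) \<and> D \<le> \<gamma> t)"
      using aew
    proof eventually_elim
      case (elim t)
      show ?case
      proof
        assume t: "t \<in> {x..y}"
        then have "t \<in> {0..T}" using xy by auto
        then obtain D where "(w has_real_derivative D) (at t within {0..T})" "D \<le> \<gamma> t" using elim by blast
        moreover have "{x..y} \<subseteq> {0..T}" using xy by auto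
        ultimately show "\<exists>D. (w has_real_derivative D) (at t within {x..y}) \<and> D \<le> \<gamma> t"
          by (meson DERIV_subset)
      qed
    qed
  qed
  define \<Gamma> where "\<Gamma> = integral {0..T} \<gamma>"
  have w0T: "w 0 = w T" using per1 per2 by (simp add: w_def)
  have wdiff: "w s - w t \<le> \<Gamma>" if st: "s \<in> {0..T}" "t \<in> {0..T}" for s t
  proof (cases "t \<le> s")
    case True
    have "w s - w t \<le> integral {t..s} \<gamma>" using incr[of t s] st True by auto
    also have "\<dots> \<le> \<Gamma>" unfolding \<Gamma>_def
      using st gamma_nonneg
      by (intro integral_subset_le integrable_on_subinterval[OF gint]) auto
    finally show ?thesis .
  next
    case False
    have 1: "w s - w 0 \<le> integral {0..s} \<gamma>" using incr[of 0 s] st by auto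
    have 2: "w T - w t \<le> integral {t..T} \<gamma>" using incr[of t T] st by auto
    have 3: "integral {0..s} \<gamma> + integral {s..T} \<gamma> = \<Gamma>" unfolding \<Gamma>_def
      using st by (intro Henstock_Kurzweil_Integration.integral_combine gint) auto
    have 4: "integral {t..T} \<gamma> \<le> integral {s..T} \<gamma>"
      using st gamma_nonneg False
      by (intro integral_subset_le integrable_on_subinterval[OF gint]) auto
    show ?thesis using 1 2 3 4 w0T by linarith
  qed
  have mono: "mono \<phi>" using phi_incr by (rule strict_mono_mono)
  show ?thesis
  proof
    fix t assume t: "t \<in> {0..T}"
    obtain t2 where t2: "t2 \<in> {0..T}" "u t2 = u t" "u' t2 \<le> 0"
      using cross[OF T der per1 t] by blast
    have "\<phi> (u' t2) \<le> 0" using monoD[OF mono t2(3)] phi0 by simp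
    moreover have "w t - w t2 \<le> \<Gamma>" using wdiff t t2 by auto
    ultimately have up: "\<phi> (u' t) \<le> \<Gamma>" using t2(2) by (simp add: w_def)
    have derm: "\<forall>t\<in>{0..T}. ((\<lambda>x. - u x) has_real_derivative - u' t) (at t within {0..T})"
      using der by (auto intro!: derivative_eq_intros)
    obtain t3 where t3: "t3 \<in> {0..T}" "- u t3 = - u t" "- u' t3 \<le> 0"
      using cross[OF T derm _ t] per1 by auto
    have "\<phi> (u' t3) \<ge> 0" using monoD[OF mono, of 0 "u' t3"] t3(3) phi0 by simp
    moreover have "w t3 - w t \<le> \<Gamma>" using wdiff t t3 by auto
    ultimately have lo: "\<phi> (u' t) \<ge> - \<Gamma>" using t3(2) by (simp add: w_def)
    show "\<bar>\<phi> (u' t)\<bar> \<le> integral {0..T} \<gamma>" using up lo by (simp add: \<Gamma>_def)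
  qed
qed



theorem lemma2p4:
  fixes \<phi> f :: "real \<Rightarrow> real" and h :: "real \<Rightarrow> real \<Rightarrow> real"
    and \<gamma> :: "real \<Rightarrow> real" and T :: real
  assumes T: "T > 0"
    and phi_homeo: "\<exists>\<psi>. homeomorphism UNIV UNIV \<phi> \<psi>"
    and phi_incr: "strict_mono \<phi>"
    and phi0: "\<phi> 0 = 0"
    and f_cont: "continuous_on UNIV f"
    and h_car: "caratheodory T h"
    and gamma_int: "\<gamma> absolutely_integrable_on {0..T}"
    and gamma_nonneg: "\<forall>t\<in>{0..T}. \<gamma> t \<ge> 0"
    and h_lower: "AE t in lebesgue. t \<in> {0..T} \<longrightarrow> (\<forall>x. h t x \<ge> - \<gamma> t)"
  shows "(\<exists>K0. \<forall>h'. caratheodory T h' \<and>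
              (AE t in lebesgue. t \<in> {0..T} \<longrightarrow> (\<forall>x. h' t x \<ge> - \<gamma> t)) \<longrightarrow>
            (\<forall>lam u u'. lam \<in> {0<..1} \<and> periodic_solution \<phi> f h' T lam u u' \<longrightarrow>
               Sup (u ` {0..T}) - Inf (u ` {0..T}) \<le> K0 \<and>
               integral {0..T} (\<lambda>t. \<bar>u' t\<bar>) \<le> K0))
       \<and> (\<forall>l1 l2. l1 < l2 \<longrightarrow> (\<exists>K1>0. \<forall>lam u u'.
              lam \<in> {0<..1} \<and> periodic_solution \<phi> f h T lam u u' \<and>
              (\<forall>t\<in>{0..T}. l1 \<le> u t \<and> u t \<le> l2) \<longrightarrow>
              (\<forall>t\<in>{0..T}. \<bar>u' t\<bar> \<le> K1)))"
proof -
  obtain \<psi> where hom: "homeomorphism UNIV UNIV \<phi> \<psi>" using phi_homeo by blast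
  have phipsi: "\<And>y. \<phi> (\<psi> y) = y" using hom by (simp add: homeomorphism_def)
  have gint: "\<gamma> integrable_on {0..T}"
    using gamma_int by (simp add: absolutely_integrable_on_def)
  define \<Gamma> where "\<Gamma> = integral {0..T} \<gamma>"
  have G0: "\<Gamma> \<ge> 0" unfolding \<Gamma>_def using gint gamma_nonneg by (intro integral_nonneg) auto
  define R where "R = max (\<psi> \<Gamma>) (- \<psi> (- \<Gamma>))"
  have R0: "R \<ge> 0"
  proof -
    have "\<not> \<psi> \<Gamma> < 0"
    proof
      assume "\<psi> \<Gamma> < 0"
      then have "\<phi> (\<psi> \<Gamma>) < \<phi> 0" using phi_incr by (simp add: strict_mono_less)
      then show False using phipsi G0 phi0 by simp
    qed
    then show ?thesis unfolding R_def by linarith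
  qed
  have bound: "\<forall>t\<in>{0..T}. \<bar>u' t\<bar> \<le> R"
    if hl: "AE t in lebesgue. t \<in> {0..T} \<longrightarrow> (\<forall>x. h' t x \<ge> - \<gamma> t)"
      and lam: "lam \<in> {0<..1}" and sol: "periodic_solution \<phi> f h' T lam u u'" for h' lam u u'
  proof
    fix t assume t: "t \<in> {0..T}"
    have "\<bar>\<phi> (u' t)\<bar> \<le> \<Gamma>"
      using deriv_bound[OF T phi_incr phi0 f_cont gint gamma_nonneg hl lam sol] t
      by (simp add: \<Gamma>_def)
    then have 1: "\<phi> (u' t) \<le> \<phi> (\<psi> \<Gamma>)" and 2: "\<phi> (\<psi> (- \<Gamma>)) \<le> \<phi> (u' t)"
      using phipsi by auto
    have "u' t \<le> \<psi> \<Gamma>" using 1 phi_incr by (simp add: strict_mono_less_eq)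
    moreover have "\<psi> (- \<Gamma>) \<le> u' t" using 2 phi_incr by (simp add: strict_mono_less_eq)
    ultimately show "\<bar>u' t\<bar> \<le> R" unfolding R_def by linarith
  qed
  show ?thesis
  proof (rule conjI)
  show "\<exists>K0. \<forall>h'. caratheodory T h' \<and>
              (AE t in lebesgue. t \<in> {0..T} \<longrightarrow> (\<forall>x. h' t x \<ge> - \<gamma> t)) \<longrightarrow>
            (\<forall>lam u u'. lam \<in> {0<..1} \<and> periodic_solution \<phi> f h' T lam u u' \<longrightarrow>
               Sup (u ` {0..T}) - Inf (u ` {0..T}) \<le> K0 \<and>
               integral {0..T} (\<lambda>t. \<bar>u' t\<bar>) \<le> K0)"
  proof (intro exI[of _ "T * R"] allI impI conjI)
    fix h' lam and u u' :: "real \<Rightarrow> real"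
    assume h': "caratheodory T h' \<and> (AE t in lebesgue. t \<in> {0..T} \<longrightarrow> (\<forall>x. h' t x \<ge> - \<gamma> t))"
      and sl: "lam \<in> {0<..1} \<and> periodic_solution \<phi> f h' T lam u u'"
    have B: "\<forall>t\<in>{0..T}. \<bar>u' t\<bar> \<le> R" using bound h' sl by blast
    have der: "\<forall>t\<in>{0..T}. (u has_real_derivative u' t) (at t within {0..T})"
      and contu': "continuous_on {0..T} u'"
      using sl by (auto simp: periodic_solution_def)
    have contu: "continuous_on {0..T} u"
      using der by (intro DERIV_continuous_on) auto
    obtain M where M: "M \<in> {0..T}" "\<forall>y\<in>{0..T}. u y \<le> u M"
      using continuous_attains_sup[OF compact_Icc _ contu] T by auto
    obtain m where m: "m \<in> {0..T}" "\<forall>y\<in>{0..T}. u m \<le> u y"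
      using continuous_attains_inf[OF compact_Icc _ contu] T by auto
    have "Sup (u ` {0..T}) = u M" using M by (intro cSup_eq_maximum) auto
    moreover have "Inf (u ` {0..T}) = u m" using m by (intro cInf_eq_minimum) auto
    moreover have "\<bar>u M - u m\<bar> \<le> R * \<bar>M - m\<bar>"
      using deriv_lipschitz[of 0 T u u' R M m] der B M m by auto
    moreover have "R * \<bar>M - m\<bar> \<le> R * T" using M m R0 by (intro mult_left_mono) auto
    ultimately show "Sup (u ` {0..T}) - Inf (u ` {0..T}) \<le> T * R"
      by (simp add: mult.commute)
    have "integral {0..T} (\<lambda>t. \<bar>u' t\<bar>) \<le> integral {0..T} (\<lambda>t. R)"
      using B by (intro integral_le integrable_continuous_interval continuous_intros contu') auto
    also have "\<dots> = T * R" using T by simp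
    finally show "integral {0..T} (\<lambda>t. \<bar>u' t\<bar>) \<le> T * R" .
  qed
  next
  show "\<forall>l1 l2. l1 < l2 \<longrightarrow> (\<exists>K1>0. \<forall>lam u u'.
              lam \<in> {0<..1} \<and> periodic_solution \<phi> f h T lam u u' \<and>
              (\<forall>t\<in>{0..T}. l1 \<le> u t \<and> u t \<le> l2) \<longrightarrow>
              (\<forall>t\<in>{0..T}. \<bar>u' t\<bar> \<le> K1))"
  proof (intro allI impI)
    fix l1 l2 :: real
    show "\<exists>K1>0. \<forall>lam u u'.
              lam \<in> {0<..1} \<and> periodic_solution \<phi> f h T lam u u' \<and>
              (\<forall>t\<in>{0..T}. l1 \<le> u t \<and> u t \<le> l2) \<longrightarrow>
              (\<forall>t\<in>{0..T}. \<bar>u' t\<bar> \<le> K1)"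
    proof (intro exI[of _ "R + 1"] conjI allI impI)
      show "R + 1 > 0" using R0 by simp
      fix lam and u u' :: "real \<Rightarrow> real"
      assume "lam \<in> {0<..1} \<and> periodic_solution \<phi> f h T lam u u' \<and>
              (\<forall>t\<in>{0..T}. l1 \<le> u t \<and> u t \<le> l2)"
      then have "\<forall>t\<in>{0..T}. \<bar>u' t\<bar> \<le> R" using bound h_lower by blast
      then show "\<forall>t\<in>{0..T}. \<bar>u' t\<bar> \<le> R + 1" by force
    qed
  qed
  qed
qed


end
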